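(* Let $n\ge3$, $K,H\le\mathbb{H}^\times$ finite with $[K,K]\le H\trianglelefteq K$, and let $P\le G_n(K,H)$ be a parabolic subgroup. Then there is a parabolic triple $(I_0,\Pi,\xi)$ with $P=P_{(I_0,\Pi,\xi)}$.
   Context: $\mathbb{H}$: quaternions. $A_n(K,H)$ is the group of diagonal matrices $\mathrm{diag}(k_1,\dots,k_n)$ with $k_i\in K$, $k_1\cdots k_n\in H$; $G_n(K,H)$ is the group generated by $A_n(K,H)$ and all $n\times n$ permutation matrices $M(\sigma)$, acting on $\mathbb{H}^n$ (column vectors, standard basis $e_1,\dots,e_n$) by left multiplication. A parabolic subgroup is the pointwise stabilizer in $G_n(K,H)$ of a subset of $\mathbb{H}^n$. A parabolic triple is $(I_0,\Pi,\xi)$ with $I_0\subseteq I=\{1,\dots,n\}$ (required empty if $K=\{1\}$), $\Pi=(I_1,\dots,I_d)$ a set partition of $I\setminus I_0$, and $\xi:I\setminus I_0\to K$. Let $D_\xi$ be the diagonal matrix with entry $\xi(j)$ for $j\notin I_0$ and $1$ for $j\in I_0$. Then $P_{(I_0,\Pi,\xi)}=P_0\times P_1\times\dots\times P_d$, where $P_0$ is $G_{|I_0|}(K,H)$ acting on the coordinates indexed by $I_0$ and trivially on the others (omitted if $I_0=\emptyset$), and $P_i=\{D_\xi M(\sigma)D_\xi^{-1}:\sigma\in\mathrm{Sym}(I_i)\}$ (the symmetric group permuting the vectors $\xi(j)e_j$, $j\in I_i$). *)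

theory Defs
  imports Complex_Main "HOL-Library.Disjoint_Sets" "HOL-Combinatorics.Permutations"
begin

datatype quat = Quat (qr: real) (qi: real) (qj: real) (qk: real)

lemma quat_eq_iff: "x = y \<longleftrightarrow> qr x = qr y \<and> qi x = qi y \<and> qj x = qj y \<and> qk x = qk y"
  by (cases x; cases y) auto

instantiation quat :: "{one, zero, plus, minus, uminus, times, inverse}"
begin
definition "0 = Quat 0 0 0 0"
definition "1 = Quat 1 0 0 0"
definition "x + y = Quat (qr x + qr y) (qi x + qi y) (qj x + qj y) (qk x + qk y)"
definition "x - y = Quat (qr x - qr y) (qi x - qi y) (qj x - qj y) (qk x - qk y)"
definition "- x = Quat (- qr x) (- qi x) (- qj x) (- qk x)"
definition "x * y = Quat
   (qr x * qr y - qi x * qi y - qj x * qj y - qk x * qk y)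
   (qr x * qi y + qi x * qr y + qj x * qk y - qk x * qj y)
   (qr x * qj y - qi x * qk y + qj x * qr y + qk x * qi y)
   (qr x * qk y + qi x * qj y - qj x * qi y + qk x * qr y)"
definition "inverse x = (let d = (qr x)^2 + (qi x)^2 + (qj x)^2 + (qk x)^2 in
   Quat (qr x / d) (- qi x / d) (- qj x / d) (- qk x / d))"
definition "divide x (y::quat) = x * inverse y"
instance ..
end

lemma quat_sq_pos:
  assumes "x \<noteq> (0::quat)"
  shows "(qr x)^2 + (qi x)^2 + (qj x)^2 + (qk x)^2 > 0"
proof -
  have "qr x \<noteq> 0 \<or> qi x \<noteq> 0 \<or> qj x \<noteq> 0 \<or> qk x \<noteq> 0"
    using assms by (auto simp: quat_eq_iff zero_quat_def)
  hence "(qr x)^2 > 0 \<or> (qi x)^2 > 0 \<or> (qj x)^2 > 0 \<or> (qk x)^2 > 0" by auto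
  moreover have "(qr x)^2 \<ge> 0" "(qi x)^2 \<ge> 0" "(qj x)^2 \<ge> 0" "(qk x)^2 \<ge> 0" by simp_all
  ultimately show ?thesis by linarith
qed

lemma quat_inverse_components:
  fixes a :: quat
  defines "c \<equiv> 1 / ((qr a)^2 + (qi a)^2 + (qj a)^2 + (qk a)^2)"
  shows "inverse a = Quat (qr a * c) (- qi a * c) (- qj a * c) (- qk a * c)"
  by (simp add: inverse_quat_def c_def Let_def)

instance quat :: division_ring
proof
  fix a b c :: quat
  show "a * b * c = a * (b * c)" by (simp add: quat_eq_iff times_quat_def algebra_simps)
  show "1 * a = a" by (simp add: quat_eq_iff times_quat_def one_quat_def)
  show "a * 1 = a" by (simp add: quat_eq_iff times_quat_def one_quat_def)
  show "a + b + c = a + (b + c)" by (simp add: quat_eq_iff plus_quat_def)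
  show "a + b = b + a" by (simp add: quat_eq_iff plus_quat_def)
  show "0 + a = a" by (simp add: quat_eq_iff plus_quat_def zero_quat_def)
  show "- a + a = 0" by (simp add: quat_eq_iff plus_quat_def zero_quat_def uminus_quat_def)
  show "a - b = a + - b" by (simp add: quat_eq_iff plus_quat_def minus_quat_def uminus_quat_def)
  show "(a + b) * c = a * c + b * c" by (simp add: quat_eq_iff plus_quat_def times_quat_def algebra_simps)
  show "a * (b + c) = a * b + a * c" by (simp add: quat_eq_iff plus_quat_def times_quat_def algebra_simps)
  show "(0::quat) \<noteq> 1" by (simp add: zero_quat_def one_quat_def)
  show "inverse (0::quat) = 0" by (simp add: inverse_quat_def zero_quat_def)
  show "a / b = a * inverse b" by (simp add: divide_quat_def)
  assume a: "a \<noteq> 0"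
  define d where "d = (qr a)^2 + (qi a)^2 + (qj a)^2 + (qk a)^2"
  define e where "e = 1 / d"
  have d0: "d \<noteq> 0" using quat_sq_pos[OF a] by (simp add: d_def)
  have ed: "e * d = 1" using d0 by (simp add: e_def)
  have inv: "inverse a = Quat (qr a * e) (- qi a * e) (- qj a * e) (- qk a * e)"
    using quat_inverse_components[of a] by (simp add: e_def d_def)
  have r: "qr a * e * qr a + qi a * e * qi a + qj a * e * qj a + qk a * e * qk a = 1"
  proof -
    have "qr a * e * qr a + qi a * e * qi a + qj a * e * qj a + qk a * e * qk a = e * d"
      by (simp add: d_def power2_eq_square algebra_simps)
    then show ?thesis using ed by simp
  qed
  show "inverse a * a = 1"
    unfolding quat_eq_iff inv times_quat_def one_quat_def
    using r by (simp add: algebra_simps)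
  show "a * inverse a = 1"
    unfolding quat_eq_iff inv times_quat_def one_quat_def
    using r by (simp add: algebra_simps)
qed

definition qsubgroup :: "quat set \<Rightarrow> bool" where
  "qsubgroup K \<longleftrightarrow> 0 \<notin> K \<and> 1 \<in> K \<and> (\<forall>x\<in>K. \<forall>y\<in>K. x * y \<in> K) \<and> (\<forall>x\<in>K. inverse x \<in> K)"

text \<open>Commutator subgroup [K,K] is contained in H (H a subgroup): all commutators lie in H.\<close>
definition commutators_in :: "quat set \<Rightarrow> quat set \<Rightarrow> bool" where
  "commutators_in K H \<longleftrightarrow> (\<forall>x\<in>K. \<forall>y\<in>K. x * y * inverse x * inverse y \<in> H)"

definition qnormal :: "quat set \<Rightarrow> quat set \<Rightarrow> bool" where
  "qnormal H K \<longleftrightarrow> qsubgroup H \<and> qsubgroup K \<and> H \<subseteq> K \<and>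
     (\<forall>k\<in>K. \<forall>h\<in>H. k * h * inverse k \<in> H)"

text \<open>A matrix over index set J is a function nat => nat => quat, meant to vanish outside J x J;
  vectors in H^J are functions nat => quat vanishing outside J.\<close>

type_synonym qmat = "nat \<Rightarrow> nat \<Rightarrow> quat"
type_synonym qvec = "nat \<Rightarrow> quat"

definition mmult :: "nat set \<Rightarrow> qmat \<Rightarrow> qmat \<Rightarrow> qmat" where
  "mmult J A B = (\<lambda>i j. \<Sum>k\<in>J. A i k * B k j)"

definition mact :: "nat set \<Rightarrow> qmat \<Rightarrow> qvec \<Rightarrow> qvec" where
  "mact J A x = (\<lambda>i. \<Sum>j\<in>J. A i j * x j)"

definition qvecs :: "nat set \<Rightarrow> qvec set" where
  "qvecs J = {x. \<forall>i. i \<notin> J \<longrightarrow> x i = 0}"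

definition idm :: "nat set \<Rightarrow> qmat" where
  "idm J = (\<lambda>i j. if i = j \<and> i \<in> J then 1 else 0)"

definition diagm :: "nat set \<Rightarrow> (nat \<Rightarrow> quat) \<Rightarrow> qmat" where
  "diagm J k = (\<lambda>i j. if i = j \<and> i \<in> J then k i else 0)"

text \<open>Permutation matrix M(sigma): M(sigma) e_j = e_{sigma j}.\<close>
definition permm :: "nat set \<Rightarrow> (nat \<Rightarrow> nat) \<Rightarrow> qmat" where
  "permm J \<sigma> = (\<lambda>i j. if i \<in> J \<and> j \<in> J \<and> i = \<sigma> j then 1 else 0)"

definition msubgroup :: "nat set \<Rightarrow> qmat set \<Rightarrow> bool" where
  "msubgroup J G \<longleftrightarrow> idm J \<in> G \<and> (\<forall>A\<in>G. \<forall>B\<in>G. mmult J A B \<in> G) \<and>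
     (\<forall>A\<in>G. \<exists>B\<in>G. mmult J A B = idm J \<and> mmult J B A = idm J)"

definition mgen :: "nat set \<Rightarrow> qmat set \<Rightarrow> qmat set" where
  "mgen J S = \<Inter>{G. msubgroup J G \<and> S \<subseteq> G}"

definition Agrp :: "nat set \<Rightarrow> quat set \<Rightarrow> quat set \<Rightarrow> qmat set" where
  "Agrp J K H = {diagm J k | k. (\<forall>j\<in>J. k j \<in> K) \<and>
      prod_list (map k (sorted_list_of_set J)) \<in> H}"

definition Ggrp :: "nat set \<Rightarrow> quat set \<Rightarrow> quat set \<Rightarrow> qmat set" where
  "Ggrp J K H = mgen J (Agrp J K H \<union> {permm J \<sigma> | \<sigma>. \<sigma> permutes J})"

definition stabiliser :: "nat set \<Rightarrow> qmat set \<Rightarrow> qvec set \<Rightarrow> qmat set" where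
  "stabiliser J G X = {g \<in> G. \<forall>x\<in>X. mact J g x = x}"

definition parabolic :: "nat set \<Rightarrow> quat set \<Rightarrow> quat set \<Rightarrow> qmat set \<Rightarrow> bool" where
  "parabolic J K H P \<longleftrightarrow> (\<exists>X \<subseteq> qvecs J. P = stabiliser J (Ggrp J K H) X)"

definition parabolic_triple ::
  "nat set \<Rightarrow> quat set \<Rightarrow> nat set \<Rightarrow> nat set set \<Rightarrow> (nat \<Rightarrow> quat) \<Rightarrow> bool" where
  "parabolic_triple I K I0 Pt \<xi> \<longleftrightarrow> I0 \<subseteq> I \<and> (K = {1} \<longrightarrow> I0 = {}) \<and>
     partition_on (I - I0) Pt \<and> (\<forall>j \<in> I - I0. \<xi> j \<in> K)"

definition Dxi :: "nat set \<Rightarrow> nat set \<Rightarrow> (nat \<Rightarrow> quat) \<Rightarrow> qmat" where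
  "Dxi I I0 \<xi> = diagm I (\<lambda>j. if j \<in> I0 then 1 else \<xi> j)"

definition Dxi_inv :: "nat set \<Rightarrow> nat set \<Rightarrow> (nat \<Rightarrow> quat) \<Rightarrow> qmat" where
  "Dxi_inv I I0 \<xi> = diagm I (\<lambda>j. inverse (if j \<in> I0 then 1 else \<xi> j))"

definition P0grp :: "nat set \<Rightarrow> quat set \<Rightarrow> quat set \<Rightarrow> nat set \<Rightarrow> qmat set" where
  "P0grp I K H I0 = {(\<lambda>i j. if i \<in> I0 \<and> j \<in> I0 then g i j else idm (I - I0) i j) | g.
      g \<in> Ggrp I0 K H}"

definition Pblock :: "nat set \<Rightarrow> nat set \<Rightarrow> (nat \<Rightarrow> quat) \<Rightarrow> nat set \<Rightarrow> qmat set" where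
  "Pblock I I0 \<xi> B = {mmult I (mmult I (Dxi I I0 \<xi>) (permm I \<sigma>)) (Dxi_inv I I0 \<xi>) | \<sigma>.
      \<sigma> permutes B}"

fun setprod_list :: "nat set \<Rightarrow> qmat set list \<Rightarrow> qmat set" where
  "setprod_list I [] = {idm I}"
| "setprod_list I (S # Ss) = {mmult I g h | g h. g \<in> S \<and> h \<in> setprod_list I Ss}"

text \<open>P_(I0,Pi,xi) = P_0 x P_1 x ... x P_d (internal product; the blocks of Pi are listed
  in some fixed (chosen) order I_1,...,I_d; the resulting set does not depend on the order since
  the factors pairwise commute).\<close>
definition Ptriple ::
  "nat set \<Rightarrow> quat set \<Rightarrow> quat set \<Rightarrow> nat set \<Rightarrow> nat set set \<Rightarrow> (nat \<Rightarrow> quat) \<Rightarrow> qmat set" where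
  "Ptriple I K H I0 Pt \<xi> = setprod_list I
     ((if I0 = {} then [] else [P0grp I K H I0]) @
      map (Pblock I I0 \<xi>) (SOME bs. distinct bs \<and> set bs = Pt))"

end

theory Submission imports Defs begin

lemma perm_restrict:
  assumes p: "\<sigma> permutes S" and fin: "finite S" and TS: "T \<subseteq> S" and inv: "\<forall>j\<in>T. \<sigma> j \<in> T"
  shows "(\<lambda>j. if j \<in> T then \<sigma> j else j) permutes T"
    and "(\<lambda>j. if j \<in> T then j else \<sigma> j) permutes (S - T)"
proof -
  have injS: "inj \<sigma>" using p by (rule permutes_inj)
  have finT: "finite T" using fin TS finite_subset by blast
  have im: "\<sigma> ` T = T"
  proof (rule endo_inj_surj[OF finT])
    show "\<sigma> ` T \<subseteq> T" using inv by blast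
    show "inj_on \<sigma> T" using injS by (meson inj_on_subset subset_UNIV)
  qed
  show "(\<lambda>j. if j \<in> T then \<sigma> j else j) permutes T"
  proof (rule inj_imp_permutes[OF _ finT])
    show "inj_on (\<lambda>j. if j \<in> T then \<sigma> j else j) T"
      using injS unfolding inj_on_def inj_def by simp
  qed (use inv in auto)
  have out: "\<sigma> j \<notin> T" if "j \<in> S - T" for j
  proof
    assume "\<sigma> j \<in> T"
    then obtain t where "t \<in> T" "\<sigma> j = \<sigma> t" using im by force
    then show False using that injS unfolding inj_def by blast
  qed
  have finST: "finite (S - T)" using fin by simp
  show "(\<lambda>j. if j \<in> T then j else \<sigma> j) permutes (S - T)"
  proof (rule inj_imp_permutes[OF _ finST])
    show "inj_on (\<lambda>j. if j \<in> T then j else \<sigma> j) (S - T)"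
      using injS unfolding inj_on_def inj_def by simp
    show "(if x \<in> T then x else \<sigma> x) \<in> S - T" if "x \<in> S - T" for x
      using that out p permutes_in_image by fastforce
    show "(if i \<in> T then i else \<sigma> i) = i" if "i \<notin> S - T" for i
      using that permutes_not_in[OF p, of i] by auto
  qed
qed

definition mon :: "nat set \<Rightarrow> (nat \<Rightarrow> nat) \<Rightarrow> (nat \<Rightarrow> quat) \<Rightarrow> qmat" where
  "mon J \<sigma> k = (\<lambda>i j. if i \<in> J \<and> j \<in> J \<and> i = \<sigma> j then k j else 0)"

lemma mon_mult:
  assumes fin: "finite J" and t: "\<tau> permutes J"
  shows "mmult J (mon J \<sigma> k) (mon J \<tau> k') = mon J (\<sigma> \<circ> \<tau>) (\<lambda>j. k (\<tau> j) * k' j)"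
proof (rule ext, rule ext)
  fix i j
  have "mmult J (mon J \<sigma> k) (mon J \<tau> k') i j =
     (\<Sum>l\<in>J. if l = \<tau> j then (if i \<in> J \<and> j \<in> J \<and> i = \<sigma> (\<tau> j) then k (\<tau> j) * k' j else 0) else 0)"
    unfolding mmult_def mon_def by (rule sum.cong) (auto simp: permutes_in_image[OF t])
  also have "\<dots> = mon J (\<sigma> \<circ> \<tau>) (\<lambda>j. k (\<tau> j) * k' j) i j"
    using fin by (simp add: sum.delta mon_def permutes_in_image[OF t])
  finally show "mmult J (mon J \<sigma> k) (mon J \<tau> k') i j = mon J (\<sigma> \<circ> \<tau>) (\<lambda>j. k (\<tau> j) * k' j) i j" .
qed

lemma mon_cong: "(\<forall>j\<in>J. \<sigma> j = \<sigma>' j) \<Longrightarrow> (\<forall>j\<in>J. k j = k' j) \<Longrightarrow> mon J \<sigma> k = mon J \<sigma>' k'"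
  by (auto simp: mon_def fun_eq_iff)

lemma mon_unique:
  assumes "\<sigma> permutes J" "\<forall>j\<in>J. k j \<noteq> 0" "mon J \<sigma> k = mon J \<sigma>' k'" "j \<in> J"
  shows "\<sigma> j = \<sigma>' j \<and> k j = k' j"
proof -
  have "\<sigma> j \<in> J" using assms(1,4) by (simp add: permutes_in_image)
  have "mon J \<sigma> k (\<sigma> j) j = mon J \<sigma>' k' (\<sigma> j) j" using assms(3) by simp
  then show ?thesis using \<open>\<sigma> j \<in> J\<close> assms(2,4) by (auto simp: mon_def split: if_splits)
qed

lemma idm_mon: "idm J = mon J id (\<lambda>_. 1)"
  by (auto simp: idm_def mon_def fun_eq_iff)
lemma diagm_mon: "diagm J k = mon J id k"
  by (auto simp: diagm_def mon_def fun_eq_iff)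
lemma permm_mon: "permm J \<sigma> = mon J \<sigma> (\<lambda>_. 1)"
  by (auto simp: permm_def mon_def fun_eq_iff)

lemma mact_mon:
  assumes fin: "finite J" and p: "\<sigma> permutes J" and j: "j \<in> J"
  shows "mact J (mon J \<sigma> k) x (\<sigma> j) = k j * x j"
proof -
  have sj: "\<sigma> j \<in> J" using p j by (simp add: permutes_in_image)
  have "mact J (mon J \<sigma> k) x (\<sigma> j) = (\<Sum>l\<in>J. if l = j then k j * x j else 0)"
    unfolding mact_def mon_def
    by (rule sum.cong) (use sj permutes_inj[OF p] in \<open>auto dest: injD\<close>)
  also have "\<dots> = k j * x j" using fin j by simp
  finally show ?thesis .
qed

lemma mact_mon_out: "i \<notin> J \<Longrightarrow> mact J (mon J \<sigma> k) x i = 0"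
  by (simp add: mact_def mon_def)

lemma stab_mon:
  assumes fin: "finite J" and p: "\<sigma> permutes J" and x: "x \<in> qvecs J"
  shows "mact J (mon J \<sigma> k) x = x \<longleftrightarrow> (\<forall>j\<in>J. k j * x j = x (\<sigma> j))"
proof
  assume "mact J (mon J \<sigma> k) x = x"
  then show "\<forall>j\<in>J. k j * x j = x (\<sigma> j)" using mact_mon[OF fin p] by metis
next
  assume a: "\<forall>j\<in>J. k j * x j = x (\<sigma> j)"
  show "mact J (mon J \<sigma> k) x = x"
  proof
    fix i
    show "mact J (mon J \<sigma> k) x i = x i"
    proof (cases "i \<in> J")
      case True
      define j where "j = inv \<sigma> i"
      have ij: "i = \<sigma> j" "j \<in> J" using True p unfolding j_def
        by (auto simp: permutes_inverses permutes_in_image permutes_inv)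
      then show ?thesis using mact_mon[OF fin p ij(2)] a by simp
    next
      case False
      then show ?thesis using x mact_mon_out[OF False] by (simp add: qvecs_def)
    qed
  qed
qed

lemma mact_mmult:
  assumes "finite J"
  shows "mact J (mmult J A B) x = mact J A (mact J B x)"
proof
  fix i
  have "mact J (mmult J A B) x i = (\<Sum>j\<in>J. \<Sum>l\<in>J. A i l * (B l j * x j))"
    unfolding mact_def mmult_def by (simp add: sum_distrib_right mult.assoc)
  also have "\<dots> = (\<Sum>l\<in>J. \<Sum>j\<in>J. A i l * (B l j * x j))" by (rule sum.swap)
  also have "\<dots> = mact J A (mact J B x) i"
    unfolding mact_def by (simp add: sum_distrib_left)
  finally show "mact J (mmult J A B) x i = mact J A (mact J B x) i" .
qed

lemma mact_idm:
  assumes fin: "finite J" and x: "x \<in> qvecs J"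
  shows "mact J (idm J) x = x"
proof
  fix i
  have "mact J (idm J) x i = (\<Sum>j\<in>J. if j = i then x i else 0)"
    unfolding mact_def by (rule sum.cong) (auto simp: idm_def)
  also have "\<dots> = x i" using fin x by (auto simp: qvecs_def)
  finally show "mact J (idm J) x i = x i" .
qed

lemma mset_map_perm: "distinct L \<Longrightarrow> \<tau> permutes set L \<Longrightarrow> mset (map \<tau> L) = mset L"
proof -
  assume d: "distinct L" and p: "\<tau> permutes set L"
  have "distinct (map \<tau> L)" using d permutes_inj_on[OF p] by (simp add: distinct_map)
  moreover have "set (map \<tau> L) = set L" using permutes_image[OF p] by simp
  ultimately show ?thesis using d by (metis set_eq_iff_mset_eq_distinct)
qed

lemma mset_concat2: "mset (concat (map (\<lambda>j. [f j, g j]) L)) = mset (map f L) + mset (map g L)"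
  by (induction L) auto
lemma prod_concat2: "prod_list (concat (map (\<lambda>j. [f j, g j]) L)) = prod_list (map (\<lambda>j. f j * (g j :: quat)) L)"
  by (induction L) (auto simp: mult.assoc)
lemma prod_ones: "prod_list (map (\<lambda>_. 1::quat) L) = 1"
  by (induction L) auto
lemma prod_nz: "\<forall>j\<in>set L. f j \<noteq> 0 \<Longrightarrow> prod_list (map f L) \<noteq> (0::quat)"
  by (induction L) auto

lemma prod_rev_inv: "\<forall>j\<in>set L. f j \<noteq> (0::quat) \<Longrightarrow>
   prod_list (rev (map (\<lambda>j. inverse (f j)) L)) = inverse (prod_list (map f L))"
  by (induction L) (auto simp: nonzero_inverse_mult_distrib prod_nz)

locale qgrp =
  fixes K H :: "quat set"
  assumes K_sub: "qsubgroup K" and H_sub: "qsubgroup H" and HK: "H \<subseteq> K"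
    and nrm: "\<forall>k\<in>K. \<forall>h\<in>H. k * h * inverse k \<in> H"
    and comm: "commutators_in K H"
begin

lemma K0: "x \<in> K \<Longrightarrow> x \<noteq> 0" and K1: "1 \<in> K"
  and Km: "x \<in> K \<Longrightarrow> y \<in> K \<Longrightarrow> x * y \<in> K" and Ki: "x \<in> K \<Longrightarrow> inverse x \<in> K"
  using K_sub unfolding qsubgroup_def by auto

lemma H1: "1 \<in> H"
  and Hm: "x \<in> H \<Longrightarrow> y \<in> H \<Longrightarrow> x * y \<in> H" and Hi: "x \<in> H \<Longrightarrow> inverse x \<in> H"
  using H_sub unfolding qsubgroup_def by auto

lemma prodK: "set xs \<subseteq> K \<Longrightarrow> prod_list xs \<in> K"
  by (induction xs) (auto simp: K1 Km)

lemma cancel1: "(x::quat) \<noteq> 0 \<Longrightarrow> inverse x * (x * y) = y"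
  by (simp add: mult.assoc[symmetric])
lemma cancel2: "(x::quat) \<noteq> 0 \<Longrightarrow> x * (inverse x * y) = y"
  by (simp add: mult.assoc[symmetric])

lemma E1: "set xs \<subseteq> K \<Longrightarrow> mset xs = mset ys \<Longrightarrow> prod_list xs * inverse (prod_list ys) \<in> H"
proof (induction xs arbitrary: ys)
  case Nil
  then show ?case using H1 by simp
next
  case (Cons a xs)
  have "a \<in> set ys" using Cons.prems(2) by (metis list.set_intros(1) mset_eq_setD)
  then obtain us vs where ys: "ys = us @ a # vs" by (meson split_list)
  have ms: "mset xs = mset (us @ vs)" using Cons.prems(2) ys by simp
  have setys: "set ys \<subseteq> K" using Cons.prems by (metis mset_eq_setD)
  have aK: "a \<in> K" and xsK: "set xs \<subseteq> K" using Cons.prems by auto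
  have IH: "prod_list xs * inverse (prod_list (us @ vs)) \<in> H" using Cons.IH[OF xsK ms] .
  define u where "u = prod_list us"
  define v where "v = prod_list vs"
  define w where "w = prod_list xs"
  have uK: "u \<in> K" using setys ys prodK unfolding u_def by auto
  have vK: "v \<in> K" using setys ys prodK unfolding v_def by auto
  have wK: "w \<in> K" using xsK prodK unfolding w_def by auto
  have h1: "w * inverse (u * v) \<in> H" using IH by (simp add: u_def v_def w_def)
  have h2: "a * (w * inverse (u * v)) * inverse a \<in> H" using nrm aK h1 by blast
  have h3: "a * u * inverse a * inverse u \<in> H" using comm aK uK unfolding commutators_in_def by blast
  have eq: "a * (w * inverse (u * v)) * inverse a * (a * u * inverse a * inverse u)
      = a * w * inverse (u * (a * v))"
    using K0[OF aK] K0[OF uK] K0[OF vK]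
    by (simp add: nonzero_inverse_mult_distrib mult.assoc cancel1)
  have "a * w * inverse (u * (a * v)) \<in> H" using Hm[OF h2 h3] eq by simp
  moreover have "prod_list (a # xs) * inverse (prod_list ys) = a * w * inverse (u * (a * v))"
    by (simp add: ys u_def v_def w_def)
  ultimately show ?case by simp
qed

lemma modH_H: "a * inverse b \<in> H \<Longrightarrow> b \<in> H \<Longrightarrow> b \<in> K \<Longrightarrow> a \<in> H"
proof -
  assume 1: "a * inverse b \<in> H" and 2: "b \<in> H" and 3: "b \<in> K"
  have "a = (a * inverse b) * b" using K0[OF 3] by (simp add: mult.assoc)
  then show ?thesis using Hm[OF 1 2] by simp
qed

lemma E1_iff: "set xs \<subseteq> K \<Longrightarrow> mset xs = mset ys \<Longrightarrow> prod_list xs \<in> H \<longleftrightarrow> prod_list ys \<in> H"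
proof -
  assume a: "set xs \<subseteq> K" and m: "mset xs = mset ys"
  have b: "set ys \<subseteq> K" using a m by (metis mset_eq_setD)
  have "prod_list xs \<in> K" "prod_list ys \<in> K" using a b prodK by auto
  then show ?thesis using modH_H[OF E1[OF a m]] modH_H[OF E1[OF b m[symmetric]]] by blast
qed

end

context qgrp begin

definition Mon :: "nat set \<Rightarrow> qmat set" where
  "Mon J = {mon J \<sigma> k | \<sigma> k. \<sigma> permutes J \<and> (\<forall>j\<in>J. k j \<in> K) \<and>
      prod_list (map k (sorted_list_of_set J)) \<in> H}"

lemma Mon_mult:
  assumes fin: "finite J" and A: "A \<in> Mon J" and B: "B \<in> Mon J"
  shows "mmult J A B \<in> Mon J"
proof -
  obtain \<sigma> k where A': "A = mon J \<sigma> k" "\<sigma> permutes J" "\<forall>j\<in>J. k j \<in> K"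
      "prod_list (map k (sorted_list_of_set J)) \<in> H" using A unfolding Mon_def by blast
  obtain \<tau> k' where B': "B = mon J \<tau> k'" "\<tau> permutes J" "\<forall>j\<in>J. k' j \<in> K"
      "prod_list (map k' (sorted_list_of_set J)) \<in> H" using B unfolding Mon_def by blast
  define L where "L = sorted_list_of_set J"
  have L: "distinct L" "set L = J" using fin by (auto simp: L_def)
  have tj: "\<tau> j \<in> J" if "j \<in> J" for j using B'(2) that by (simp add: permutes_in_image)
  have xsK: "set (concat (map (\<lambda>j. [k (\<tau> j), k' j]) L)) \<subseteq> K"
  proof
    fix y assume "y \<in> set (concat (map (\<lambda>j. [k (\<tau> j), k' j]) L))"
    then obtain j where "j \<in> J" "y = k (\<tau> j) \<or> y = k' j" using L(2) by auto
    then show "y \<in> K" using A'(3) B'(3) tj by blast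
  qed
  have ms: "mset (concat (map (\<lambda>j. [k (\<tau> j), k' j]) L)) = mset (map k L @ map k' L)"
  proof -
    have "mset (map (\<lambda>j. k (\<tau> j)) L) = mset (map k (map \<tau> L))" by (simp only: map_map o_def)
    also have "\<dots> = image_mset k (mset (map \<tau> L))" by (rule mset_map)
    also have "\<dots> = image_mset k (mset L)" using mset_map_perm[OF L(1), of \<tau>] B'(2) L(2) by simp
    also have "\<dots> = mset (map k L)" by simp
    finally have "mset (map (\<lambda>j. k (\<tau> j)) L) = mset (map k L)" .
    then show ?thesis by (simp add: mset_concat2)
  qed
  have "prod_list (map k L @ map k' L) \<in> H" using A'(4) B'(4) Hm by (simp add: L_def)
  then have "prod_list (map (\<lambda>j. k (\<tau> j) * k' j) L) \<in> H"
    using E1_iff[OF xsK ms] by (simp add: prod_concat2)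
  moreover have "\<forall>j\<in>J. k (\<tau> j) * k' j \<in> K" using A'(3) B'(3) tj Km by blast
  moreover have "\<sigma> \<circ> \<tau> permutes J" using A'(2) B'(2) by (simp add: permutes_compose)
  ultimately show ?thesis unfolding Mon_def A'(1) B'(1) mon_mult[OF fin B'(2)] L_def
    by (intro CollectI exI[of _ "\<sigma> \<circ> \<tau>"] exI[of _ "\<lambda>j. k (\<tau> j) * k' j"]) simp
qed

lemma Mon_idm: "finite J \<Longrightarrow> idm J \<in> Mon J"
  unfolding Mon_def idm_mon using K1 H1 by (auto simp: prod_ones intro!: exI[of _ id])

lemma Mon_inv:
  assumes fin: "finite J" and A: "A \<in> Mon J"
  shows "\<exists>B\<in>Mon J. mmult J A B = idm J \<and> mmult J B A = idm J"
proof -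
  obtain \<sigma> k where A': "A = mon J \<sigma> k" "\<sigma> permutes J" "\<forall>j\<in>J. k j \<in> K"
      "prod_list (map k (sorted_list_of_set J)) \<in> H" using A unfolding Mon_def by blast
  define L where "L = sorted_list_of_set J"
  have L: "distinct L" "set L = J" using fin by (auto simp: L_def)
  have pi: "inv \<sigma> permutes J" using A'(2) by (simp add: permutes_inv)
  have ij: "inv \<sigma> j \<in> J" if "j \<in> J" for j using pi that by (simp add: permutes_in_image)
  define k' where "k' = (\<lambda>j. inverse (k (inv \<sigma> j)))"
  have k'K: "\<forall>j\<in>J. k' j \<in> K" using A'(3) ij Ki by (simp add: k'_def)
  have xsK: "set (map k' L) \<subseteq> K" using k'K L by auto
  have ms: "mset (map k' L) = mset (rev (map (\<lambda>j. inverse (k j)) L))"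
  proof -
    have "mset (map k' L) = mset (map (\<lambda>j. inverse (k j)) (map (inv \<sigma>) L))"
      by (simp only: k'_def map_map o_def)
    also have "\<dots> = image_mset (\<lambda>j. inverse (k j)) (mset (map (inv \<sigma>) L))"
      by (rule mset_map)
    also have "\<dots> = mset (map (\<lambda>j. inverse (k j)) L)" using mset_map_perm[OF L(1), of "inv \<sigma>"] pi L(2) by simp
    finally show ?thesis by simp
  qed
  have "prod_list (rev (map (\<lambda>j. inverse (k j)) L)) \<in> H"
    using prod_rev_inv[of L k] A'(3,4) L K0 Hi by (simp add: L_def)
  then have pH: "prod_list (map k' L) \<in> H" using E1_iff[OF xsK ms] by simp
  have B: "mon J (inv \<sigma>) k' \<in> Mon J" unfolding Mon_def using pi k'K pH L_def by blast
  have nz: "k j \<noteq> 0" if "j \<in> J" for j using A'(3) K0 that by blast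
  have 1: "mmult J A (mon J (inv \<sigma>) k') = idm J"
    unfolding A'(1) mon_mult[OF fin pi] idm_mon
  proof (rule mon_cong)
    show "\<forall>j\<in>J. (\<sigma> \<circ> inv \<sigma>) j = id j" by (simp add: permutes_inverses[OF A'(2)])
    show "\<forall>j\<in>J. k (inv \<sigma> j) * k' j = 1" using nz ij by (simp add: k'_def)
  qed
  have 2: "mmult J (mon J (inv \<sigma>) k') A = idm J"
    unfolding A'(1) mon_mult[OF fin A'(2)] idm_mon
  proof (rule mon_cong)
    show "\<forall>j\<in>J. (inv \<sigma> \<circ> \<sigma>) j = id j" by (simp add: permutes_inverses[OF A'(2)])
    show "\<forall>j\<in>J. k' (\<sigma> j) * k j = 1" using nz by (simp add: k'_def permutes_inverses[OF A'(2)])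
  qed
  show ?thesis using B 1 2 by blast
qed

lemma Ggrp_eq:
  assumes fin: "finite J"
  shows "Ggrp J K H = Mon J"
proof
  have sub: "msubgroup J (Mon J)" unfolding msubgroup_def
    using Mon_idm[OF fin] Mon_mult[OF fin] Mon_inv[OF fin] by blast
  have gens: "Agrp J K H \<union> {permm J \<sigma> | \<sigma>. \<sigma> permutes J} \<subseteq> Mon J"
  proof
    fix g assume "g \<in> Agrp J K H \<union> {permm J \<sigma> | \<sigma>. \<sigma> permutes J}"
    then show "g \<in> Mon J"
    proof
      assume "g \<in> Agrp J K H"
      then show ?thesis unfolding Agrp_def Mon_def diagm_mon by (auto intro!: exI[of _ id])
    next
      assume "g \<in> {permm J \<sigma> | \<sigma>. \<sigma> permutes J}"
      then obtain \<sigma> where "g = mon J \<sigma> (\<lambda>_. 1)" "\<sigma> permutes J" unfolding permm_mon by blast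
      then show ?thesis unfolding Mon_def using K1 H1
        by (intro CollectI exI[of _ \<sigma>] exI[of _ "\<lambda>_. 1::quat"]) (auto simp: prod_ones)
    qed
  qed
  show "Ggrp J K H \<subseteq> Mon J" unfolding Ggrp_def mgen_def using sub gens by blast
  show "Mon J \<subseteq> Ggrp J K H" unfolding Ggrp_def mgen_def
  proof (rule Inter_greatest)
    fix G assume "G \<in> {G. msubgroup J G \<and> Agrp J K H \<union> {permm J \<sigma> | \<sigma>. \<sigma> permutes J} \<subseteq> G}"
    then have G: "msubgroup J G" "Agrp J K H \<subseteq> G" "{permm J \<sigma> | \<sigma>. \<sigma> permutes J} \<subseteq> G" by auto
    show "Mon J \<subseteq> G"
    proof
      fix g assume "g \<in> Mon J"
      then obtain \<sigma> k where g: "g = mon J \<sigma> k" "\<sigma> permutes J" "\<forall>j\<in>J. k j \<in> K"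
        "prod_list (map k (sorted_list_of_set J)) \<in> H" unfolding Mon_def by blast
      have d: "diagm J k \<in> G" using G(2) g(3,4) unfolding Agrp_def by blast
      have p: "permm J \<sigma> \<in> G" using G(3) g(2) by blast
      have "mmult J (permm J \<sigma>) (diagm J k) = g"
        unfolding permm_mon diagm_mon mon_mult[OF fin permutes_id] g(1) by (rule mon_cong) auto
      then show "g \<in> G" using G(1) d p unfolding msubgroup_def by metis
    qed
  qed
qed

end

lemma prod_filter: "\<forall>j\<in>set L. \<not> P j \<longrightarrow> f j = 1 \<Longrightarrow> prod_list (map f (filter P L)) = prod_list (map f L)"
  by (induction L) auto

lemma P0_elem:
  assumes "I0 \<subseteq> I" "\<sigma> permutes I0"
  shows "(\<lambda>i j. if i \<in> I0 \<and> j \<in> I0 then mon I0 \<sigma> k i j else idm (I - I0) i j)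
       = mon I \<sigma> (\<lambda>j. if j \<in> I0 then k j else 1)"
proof (intro ext)
  fix i j
  show "(if i \<in> I0 \<and> j \<in> I0 then mon I0 \<sigma> k i j else idm (I - I0) i j)
       = mon I \<sigma> (\<lambda>j. if j \<in> I0 then k j else 1) i j"
  proof (cases "j \<in> I0")
    case True
    then have "\<sigma> j \<in> I0" using assms(2) by (simp add: permutes_in_image)
    then show ?thesis using True assms(1) by (auto simp: mon_def idm_def)
  next
    case False
    then have "\<sigma> j = j" using assms(2) by (simp add: permutes_not_in)
    then show ?thesis using False assms(1) by (auto simp: mon_def idm_def)
  qed
qed

context qgrp begin

lemma filter_prod:
  assumes fin: "finite I" and sub: "I0 \<subseteq> I" and one: "\<forall>j\<in>I - I0. f j = 1" and fK: "\<forall>j\<in>I. f j \<in> K"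
  shows "prod_list (map f (sorted_list_of_set I)) \<in> H \<longleftrightarrow> prod_list (map f (sorted_list_of_set I0)) \<in> H"
proof -
  define L where "L = sorted_list_of_set I"
  have L: "distinct L" "set L = I" using fin by (auto simp: L_def)
  have fin0: "finite I0" using fin sub finite_subset by blast
  have e1: "prod_list (map f (filter (\<lambda>j. j \<in> I0) L)) = prod_list (map f L)"
    by (rule prod_filter) (use one L in auto)
  have "mset (filter (\<lambda>j. j \<in> I0) L) = mset (sorted_list_of_set I0)"
    using L fin0 sub set_eq_iff_mset_eq_distinct[of "filter (\<lambda>j. j \<in> I0) L" "sorted_list_of_set I0"]
    by auto
  then have ms: "mset (map f (filter (\<lambda>j. j \<in> I0) L)) = mset (map f (sorted_list_of_set I0))"
    by (simp only: mset_map)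
  have xs: "set (map f (filter (\<lambda>j. j \<in> I0) L)) \<subseteq> K" using fK L by auto
  show ?thesis using E1_iff[OF xs ms] e1 by (simp add: L_def)
qed

end

locale stabsetup = qgrp +
  fixes I :: "nat set" and X :: "qvec set"
  assumes finI: "finite I" and XI: "X \<subseteq> qvecs I"
begin

definition qrel where "qrel i j \<longleftrightarrow> (\<exists>c\<in>K. \<forall>x\<in>X. x j = c * x i)"
definition Z where "Z = {j\<in>I. \<forall>x\<in>X. x j = 0}"
definition I0 where "I0 = (if K = {1} then {} else Z)"
definition cls where "cls j = {i \<in> I - I0. qrel j i}"
definition Pt where "Pt = cls ` (I - I0)"
definition rep where "rep j = Min (cls j)"
definition xi where "xi j = (SOME c. c \<in> K \<and> (\<forall>x\<in>X. x j = c * x (rep j)))"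
definition xp where "xp j = (if j \<in> I0 then 1 else xi j)"
definition cm where "cm \<sigma> = mon I \<sigma> (\<lambda>j. xp (\<sigma> j) * inverse (xp j))"
definition Stab where "Stab = stabiliser I (Ggrp I K H) X"

lemma qrel_refl: "qrel i i"
  unfolding qrel_def using K1 by force

lemma qrel_sym: "qrel i j \<Longrightarrow> qrel j i"
  unfolding qrel_def
proof -
  assume "\<exists>c\<in>K. \<forall>x\<in>X. x j = c * x i"
  then obtain c where c: "c \<in> K" "\<forall>x\<in>X. x j = c * x i" by blast
  have "\<forall>x\<in>X. x i = inverse c * x j"
  proof
    fix x assume "x \<in> X"
    then have "x j = c * x i" using c by blast
    then show "x i = inverse c * x j" using K0[OF c(1)] by (simp add: cancel1)
  qed
  then show "\<exists>c\<in>K. \<forall>x\<in>X. x i = c * x j" using Ki[OF c(1)] by blast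
qed

lemma qrel_trans: "qrel i j \<Longrightarrow> qrel j l \<Longrightarrow> qrel i l"
  unfolding qrel_def
proof -
  assume "\<exists>c\<in>K. \<forall>x\<in>X. x j = c * x i" "\<exists>c\<in>K. \<forall>x\<in>X. x l = c * x j"
  then obtain c d where c: "c \<in> K" "\<forall>x\<in>X. x j = c * x i" and d: "d \<in> K" "\<forall>x\<in>X. x l = d * x j" by blast
  have "\<forall>x\<in>X. x l = (d * c) * x i" using c d by (simp add: mult.assoc)
  then show "\<exists>c\<in>K. \<forall>x\<in>X. x l = c * x i" using Km[OF d(1) c(1)] by blast
qed

lemma I0_sub: "I0 \<subseteq> I" by (auto simp: I0_def Z_def)

lemma I0_K1: "K = {1} \<Longrightarrow> I0 = {}" unfolding I0_def by (rule if_P)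

lemma cls_eq: "qrel j i \<Longrightarrow> cls i = cls j"
  unfolding cls_def using qrel_sym qrel_trans by blast

lemma rep_eq: "qrel j i \<Longrightarrow> rep i = rep j"
  unfolding rep_def using cls_eq by simp

lemma xi_prop:
  assumes j: "j \<in> I - I0"
  shows "xi j \<in> K \<and> (\<forall>x\<in>X. x j = xi j * x (rep j))"
proof -
  have fin: "finite (cls j)" using finI unfolding cls_def by simp
  have "j \<in> cls j" using j qrel_refl unfolding cls_def by simp
  then have "rep j \<in> cls j" unfolding rep_def using fin by (metis Min_in empty_iff)
  then have "qrel (rep j) j" unfolding cls_def using qrel_sym by blast
  then have "\<exists>c. c \<in> K \<and> (\<forall>x\<in>X. x j = c * x (rep j))" unfolding qrel_def by blast
  then show ?thesis unfolding xi_def by (rule someI_ex)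
qed

lemma xp_K: "j \<in> I \<Longrightarrow> xp j \<in> K"
  using xi_prop K1 unfolding xp_def by auto

lemma xp_nz: "j \<in> I \<Longrightarrow> xp j \<noteq> 0"
  using xp_K K0 by blast

lemma partition: "partition_on (I - I0) Pt"
  unfolding partition_on_def
proof (intro conjI)
  show "\<Union> Pt = I - I0" unfolding Pt_def cls_def using qrel_refl by auto
  show "disjoint Pt" unfolding disjoint_def Pt_def
  proof (intro ballI impI)
    fix A B assume "A \<in> cls ` (I - I0)" "B \<in> cls ` (I - I0)" "A \<noteq> B"
    then obtain a b where ab: "A = cls a" "B = cls b" by blast
    show "A \<inter> B = {}"
    proof (rule ccontr)
      assume "A \<inter> B \<noteq> {}"
      then obtain l where "l \<in> cls a" "l \<in> cls b" using ab by blast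
      then have "qrel a l" "qrel b l" unfolding cls_def by auto
      then have "cls a = cls b" using cls_eq qrel_sym by metis
      then show False using ab \<open>A \<noteq> B\<close> by simp
    qed
  qed
  show "{} \<notin> Pt" unfolding Pt_def cls_def using qrel_refl by blast
qed

lemma Pt_fin: "finite Pt" unfolding Pt_def using finI by simp

lemma Pblock_eq:
  assumes b: "b \<subseteq> I"
  shows "Pblock I I0 xi b = {cm \<sigma> | \<sigma>. \<sigma> permutes b}"
proof -
  have eq: "mmult I (mmult I (Dxi I I0 xi) (permm I \<sigma>)) (Dxi_inv I I0 xi) = cm \<sigma>" if p: "\<sigma> permutes b" for \<sigma>
  proof -
    have pI: "\<sigma> permutes I" using permutes_subset[OF p b] .
    have D: "Dxi I I0 xi = mon I id xp" unfolding Dxi_def diagm_mon xp_def ..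
    have Di: "Dxi_inv I I0 xi = mon I id (\<lambda>j. inverse (xp j))" unfolding Dxi_inv_def diagm_mon xp_def ..
    show ?thesis unfolding D Di permm_mon mon_mult[OF finI pI] mon_mult[OF finI permutes_id] cm_def
      by (rule mon_cong) auto
  qed
  show ?thesis
  proof
    show "Pblock I I0 xi b \<subseteq> {cm \<sigma> |\<sigma>. \<sigma> permutes b}" unfolding Pblock_def using eq by auto
    show "{cm \<sigma> |\<sigma>. \<sigma> permutes b} \<subseteq> Pblock I I0 xi b"
    proof
      fix m assume "m \<in> {cm \<sigma> |\<sigma>. \<sigma> permutes b}"
      then obtain \<sigma> where "m = cm \<sigma>" "\<sigma> permutes b" by blast
      then show "m \<in> Pblock I I0 xi b" unfolding Pblock_def mem_Collect_eq
        by (intro exI[of _ \<sigma>] conjI) (simp_all add: eq)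
    qed
  qed
qed

lemma cm_mult:
  assumes "\<sigma> permutes I" "\<tau> permutes I"
  shows "mmult I (cm \<sigma>) (cm \<tau>) = cm (\<sigma> \<circ> \<tau>)"
  unfolding cm_def mon_mult[OF finI assms(2)]
proof (rule mon_cong)
  show "\<forall>j\<in>I. xp (\<sigma> (\<tau> j)) * inverse (xp (\<tau> j)) * (xp (\<tau> j) * inverse (xp j)) =
      xp ((\<sigma> \<circ> \<tau>) j) * inverse (xp j)"
  proof
    fix j assume "j \<in> I"
    then have "xp (\<tau> j) \<noteq> 0" using xp_nz assms(2) by (simp add: permutes_in_image)
    then show "xp (\<sigma> (\<tau> j)) * inverse (xp (\<tau> j)) * (xp (\<tau> j) * inverse (xp j)) =
      xp ((\<sigma> \<circ> \<tau>) j) * inverse (xp j)" by (simp add: mult.assoc cancel1)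
  qed
qed simp

lemma cm_id: "cm id = idm I"
  unfolding cm_def idm_mon by (rule mon_cong) (auto simp: xp_nz)

lemma cm_Mon:
  assumes p: "\<sigma> permutes I"
  shows "cm \<sigma> \<in> Mon I"
proof -
  define L where "L = sorted_list_of_set I"
  have L: "distinct L" "set L = I" using finI by (auto simp: L_def)
  have sj: "\<sigma> j \<in> I" if "j \<in> I" for j using p that by (simp add: permutes_in_image)
  define xs where "xs = concat (map (\<lambda>j. [xp (\<sigma> j), inverse (xp j)]) L)"
  define ys where "ys = map xp L @ rev (map (\<lambda>j. inverse (xp j)) L)"
  have xsK: "set xs \<subseteq> K"
  proof
    fix y assume "y \<in> set xs"
    then obtain j where "j \<in> I" "y = xp (\<sigma> j) \<or> y = inverse (xp j)" using L(2) by (auto simp: xs_def)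
    then show "y \<in> K" using xp_K sj Ki by blast
  qed
  have ms: "mset xs = mset ys"
  proof -
    have "mset (map (\<lambda>j. xp (\<sigma> j)) L) = mset (map xp (map \<sigma> L))" by (simp only: map_map o_def)
    also have "\<dots> = image_mset xp (mset (map \<sigma> L))" by (rule mset_map)
    also have "\<dots> = image_mset xp (mset L)" using mset_map_perm[OF L(1), of \<sigma>] p L(2) by simp
    also have "\<dots> = mset (map xp L)" by simp
    finally have "mset (map (\<lambda>j. xp (\<sigma> j)) L) = mset (map xp L)" .
    then show ?thesis by (simp add: xs_def ys_def mset_concat2)
  qed
  have "prod_list ys = 1"
    using prod_rev_inv[of L xp] prod_nz[of L xp] xp_nz L(2) by (simp add: ys_def)
  then have "prod_list xs \<in> H" using E1_iff[OF xsK ms] H1 by simp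
  then have "prod_list (map (\<lambda>j. xp (\<sigma> j) * inverse (xp j)) L) \<in> H" by (simp add: xs_def prod_concat2)
  moreover have "\<forall>j\<in>I. xp (\<sigma> j) * inverse (xp j) \<in> K" using xp_K sj Ki Km by blast
  ultimately show ?thesis unfolding Mon_def cm_def L_def
    by (intro CollectI exI[of _ \<sigma>] exI[of _ "\<lambda>j. xp (\<sigma> j) * inverse (xp j)"]) (simp add: p)
qed

lemma Stab_eq: "Stab = {g \<in> Mon I. \<forall>x\<in>X. mact I g x = x}"
  unfolding Stab_def stabiliser_def Ggrp_eq[OF finI] ..

lemma setprod_sub: "\<forall>A\<in>set Ss. A \<subseteq> Stab \<Longrightarrow> setprod_list I Ss \<subseteq> Stab"
proof (induction Ss)
  case Nil
  then show ?case using Mon_idm[OF finI] mact_idm[OF finI] XI by (auto simp: Stab_eq)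
next
  case (Cons A Ss)
  show ?case
  proof
    fix m assume "m \<in> setprod_list I (A # Ss)"
    then obtain g h where m: "m = mmult I g h" "g \<in> A" "h \<in> setprod_list I Ss" by auto
    have g: "g \<in> Mon I" "\<forall>x\<in>X. mact I g x = x" using m(2) Cons.prems by (auto simp: Stab_eq)
    have h: "h \<in> Mon I" "\<forall>x\<in>X. mact I h x = x" using m(3) Cons by (auto simp: Stab_eq)
    show "m \<in> Stab" unfolding Stab_eq m(1)
      using Mon_mult[OF finI g(1) h(1)] g(2) h(2) mact_mmult[OF finI] by simp
  qed
qed


lemma rep_in: "j \<in> I - I0 \<Longrightarrow> rep j \<in> I - I0"
proof -
  assume j: "j \<in> I - I0"
  have fin: "finite (cls j)" using finI unfolding cls_def by simp
  have "j \<in> cls j" using j qrel_refl unfolding cls_def by simp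
  then have "rep j \<in> cls j" unfolding rep_def using fin by (metis Min_in empty_iff)
  then show ?thesis unfolding cls_def by simp
qed

lemma block_Stab:
  assumes b: "b \<in> Pt" and p: "\<sigma> permutes b"
  shows "cm \<sigma> \<in> Stab"
proof -
  obtain i where i: "i \<in> I - I0" "b = cls i" using b unfolding Pt_def by auto
  have bI: "b \<subseteq> I - I0" using i unfolding cls_def by auto
  have pI: "\<sigma> permutes I" using permutes_subset[OF p] bI by blast
  have st: "\<forall>j\<in>I. (xp (\<sigma> j) * inverse (xp j)) * x j = x (\<sigma> j)" if x: "x \<in> X" for x
  proof
    fix j assume j: "j \<in> I"
    show "(xp (\<sigma> j) * inverse (xp j)) * x j = x (\<sigma> j)"
    proof (cases "j \<in> b")
      case False
      then have "\<sigma> j = j" using p by (simp add: permutes_not_in)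
      then show ?thesis using xp_nz[OF j] by simp
    next
      case True
      have sj: "\<sigma> j \<in> b" using p True by (simp add: permutes_in_image)
      have "qrel i j" "qrel i (\<sigma> j)" using i True sj unfolding cls_def by auto
      then have "qrel j (\<sigma> j)" using qrel_sym qrel_trans by blast
      then have r: "rep (\<sigma> j) = rep j" by (rule rep_eq)
      have j0: "j \<in> I - I0" "\<sigma> j \<in> I - I0" using bI True sj by auto
      have e1: "x j = xi j * x (rep j)" using xi_prop[OF j0(1)] x by blast
      have e2: "x (\<sigma> j) = xi (\<sigma> j) * x (rep j)" using xi_prop[OF j0(2)] x r by auto
      have xx: "xp j = xi j" "xp (\<sigma> j) = xi (\<sigma> j)" using j0 by (auto simp: xp_def)
      have nz: "xi j \<noteq> 0" using xi_prop[OF j0(1)] K0 by blast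
      show ?thesis unfolding e1 e2 xx using nz by (simp add: mult.assoc cancel1)
    qed
  qed
  have "\<forall>x\<in>X. mact I (cm \<sigma>) x = x"
  proof
    fix x assume x: "x \<in> X"
    then have "x \<in> qvecs I" using XI by blast
    then show "mact I (cm \<sigma>) x = x" unfolding cm_def using stab_mon[OF finI pI] st[OF x] by blast
  qed
  then show ?thesis unfolding Stab_eq using cm_Mon[OF pI] by blast
qed

lemma P0_Stab:
  assumes K1': "K \<noteq> {1}"
  shows "P0grp I K H I0 \<subseteq> Stab"
proof
  fix m assume "m \<in> P0grp I K H I0"
  then obtain g where m: "m = (\<lambda>i j. if i \<in> I0 \<and> j \<in> I0 then g i j else idm (I - I0) i j)"
      "g \<in> Ggrp I0 K H" unfolding P0grp_def by blast
  have fin0: "finite I0" using finI I0_sub finite_subset by blast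
  obtain \<sigma> k where g: "g = mon I0 \<sigma> k" "\<sigma> permutes I0" "\<forall>j\<in>I0. k j \<in> K"
      "prod_list (map k (sorted_list_of_set I0)) \<in> H"
    using m(2) unfolding Ggrp_eq[OF fin0] Mon_def by blast
  define k0 where "k0 = (\<lambda>j. if j \<in> I0 then k j else 1)"
  have m': "m = mon I \<sigma> k0" unfolding m(1) g(1) k0_def by (rule P0_elem[OF I0_sub g(2)])
  have pI: "\<sigma> permutes I" using permutes_subset[OF g(2) I0_sub] .
  have k0K: "\<forall>j\<in>I. k0 j \<in> K" using g(3) K1 by (simp add: k0_def)
  have e: "map k0 (sorted_list_of_set I0) = map k (sorted_list_of_set I0)"
    using fin0 by (simp add: k0_def)
  have "prod_list (map k0 (sorted_list_of_set I0)) \<in> H" unfolding e using g(4) .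
  then have "prod_list (map k0 (sorted_list_of_set I)) \<in> H"
    using filter_prod[OF finI I0_sub _ k0K] by (simp add: k0_def)
  then have mM: "m \<in> Mon I" unfolding m' Mon_def using pI k0K by blast
  have I0Z: "I0 = Z" using K1' by (simp add: I0_def)
  have "\<forall>x\<in>X. mact I m x = x"
  proof
    fix x assume x: "x \<in> X"
    have "\<forall>j\<in>I. k0 j * x j = x (\<sigma> j)"
    proof
      fix j assume j: "j \<in> I"
      show "k0 j * x j = x (\<sigma> j)"
      proof (cases "j \<in> I0")
        case True
        then have "\<sigma> j \<in> I0" using g(2) by (simp add: permutes_in_image)
        then show ?thesis using True x unfolding I0Z Z_def by auto
      next
        case False
        then show ?thesis using g(2) by (simp add: permutes_not_in k0_def)
      qed
    qed
    then show "mact I m x = x" unfolding m' using stab_mon[OF finI pI] x XI by blast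
  qed
  then show "m \<in> Stab" using mM by (simp add: Stab_eq)
qed

lemma blocks_prod:
  "distinct bs \<Longrightarrow> (\<forall>b\<in>set bs. b \<subseteq> I) \<Longrightarrow> (\<forall>b\<in>set bs. \<forall>b'\<in>set bs. b \<noteq> b' \<longrightarrow> b \<inter> b' = {}) \<Longrightarrow>
   \<rho> permutes \<Union>(set bs) \<Longrightarrow> (\<forall>b\<in>set bs. \<forall>j\<in>b. \<rho> j \<in> b) \<Longrightarrow>
   cm \<rho> \<in> setprod_list I (map (Pblock I I0 xi) bs)"
proof (induction bs arbitrary: \<rho>)
  case Nil
  then have "\<rho> = id" by simp
  then show ?case using cm_id by (simp add: id_def)
next
  case (Cons b bs)
  define U where "U = \<Union>(set (b # bs))"
  have UI: "U \<subseteq> I" using Cons.prems(2) unfolding U_def by auto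
  have finU: "finite U" using finI UI finite_subset by blast
  have bU: "b \<subseteq> U" unfolding U_def by auto
  have pU: "\<rho> permutes U" using Cons.prems(4) unfolding U_def by simp
  have inv: "\<forall>j\<in>b. \<rho> j \<in> b" using Cons.prems(5) by simp
  define \<rho>b where "\<rho>b = (\<lambda>j. if j \<in> b then \<rho> j else j)"
  define \<rho>r where "\<rho>r = (\<lambda>j. if j \<in> b then j else \<rho> j)"
  have pb: "\<rho>b permutes b" using perm_restrict(1)[OF pU finU bU inv] unfolding \<rho>b_def .
  have pr0: "\<rho>r permutes (U - b)" using perm_restrict(2)[OF pU finU bU inv] unfolding \<rho>r_def .
  have bnot: "b \<notin> set bs" using Cons.prems(1) by simp
  have disj: "\<forall>b'\<in>set bs. b \<inter> b' = {}" using Cons.prems(3) bnot by (metis list.set_intros(1,2))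
  have Ueq: "U - b = \<Union>(set bs)" using disj unfolding U_def by auto
  have pr: "\<rho>r permutes \<Union>(set bs)" using pr0 Ueq by simp
  have prs: "\<forall>b'\<in>set bs. \<forall>j\<in>b'. \<rho>r j \<in> b'"
  proof (intro ballI)
    fix b' j assume b': "b' \<in> set bs" and j: "j \<in> b'"
    then have "j \<notin> b" using disj by blast
    then show "\<rho>r j \<in> b'" using Cons.prems(5) b' j unfolding \<rho>r_def by simp
  qed
  have IH: "cm \<rho>r \<in> setprod_list I (map (Pblock I I0 xi) bs)"
  proof (rule Cons.IH[OF _ _ _ pr prs])
    show "distinct bs" using Cons.prems(1) by simp
    show "\<forall>b\<in>set bs. b \<subseteq> I" using Cons.prems(2) by simp
    show "\<forall>b\<in>set bs. \<forall>b'\<in>set bs. b \<noteq> b' \<longrightarrow> b \<inter> b' = {}" using Cons.prems(3) by simp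
  qed
  have bI: "b \<subseteq> I" using Cons.prems(2) by simp
  have cb: "cm \<rho>b \<in> Pblock I I0 xi b" using Pblock_eq[OF bI] pb by blast
  have comp: "\<rho>b \<circ> \<rho>r = \<rho>"
  proof
    fix j show "(\<rho>b \<circ> \<rho>r) j = \<rho> j"
    proof (cases "j \<in> b")
      case True then show ?thesis using inv unfolding \<rho>b_def \<rho>r_def by simp
    next
      case False
      have "\<rho> j \<notin> b"
      proof (cases "j \<in> U")
        case True
        then obtain b' where b': "b' \<in> set bs" "j \<in> b'" using False unfolding U_def by auto
        then have "\<rho> j \<in> b'" using Cons.prems(5) by simp
        then show ?thesis using disj b'(1) by blast
      next
        case False
        then have "\<rho> j = j" using permutes_not_in[OF pU] by simp
        then show ?thesis using \<open>j \<notin> b\<close> by simp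
      qed
      then show ?thesis using False unfolding \<rho>b_def \<rho>r_def by simp
    qed
  qed
  have bsI: "\<Union>(set bs) \<subseteq> I" using Cons.prems(2) by auto
  have "mmult I (cm \<rho>b) (cm \<rho>r) = cm \<rho>"
    using cm_mult[OF permutes_subset[OF pb bI] permutes_subset[OF pr bsI]] comp by simp
  then show ?case using cb IH by force
qed


lemma Pt_union: "\<Union>Pt = I - I0" using partition unfolding partition_on_def by blast

lemma Pt_disj: "\<forall>b\<in>Pt. \<forall>b'\<in>Pt. b \<noteq> b' \<longrightarrow> b \<inter> b' = {}"
  using partition unfolding partition_on_def disjoint_def by blast

lemma Stab_sub:
  assumes bsd: "distinct bs" "set bs = Pt"
  shows "Stab \<subseteq> setprod_list I ((if I0 = {} then [] else [P0grp I K H I0]) @ map (Pblock I I0 xi) bs)"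
proof
  fix g assume "g \<in> Stab"
  then have gM: "g \<in> Mon I" and gs: "\<forall>x\<in>X. mact I g x = x" by (auto simp: Stab_eq)
  obtain \<sigma> k where g: "g = mon I \<sigma> k" "\<sigma> permutes I" "\<forall>j\<in>I. k j \<in> K"
      "prod_list (map k (sorted_list_of_set I)) \<in> H" using gM unfolding Mon_def by blast
  have st: "\<forall>j\<in>I. k j * x j = x (\<sigma> j)" if x: "x \<in> X" for x
    using gs x XI stab_mon[OF finI g(2), of x k] g(1) by blast
  have sI: "\<sigma> j \<in> I" if "j \<in> I" for j using g(2) that by (simp add: permutes_in_image)
  have knz: "k j \<noteq> 0" if "j \<in> I" for j using g(3) K0 that by blast
  have a: "\<sigma> j \<in> I0" if j: "j \<in> I0" for j
  proof -
    have K1': "K \<noteq> {1}" and I0Z: "I0 = Z" using j by (auto simp: I0_def split: if_splits)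
    have jZ: "j \<in> I" "\<forall>x\<in>X. x j = 0" using j unfolding I0Z Z_def by auto
    have "\<forall>x\<in>X. x (\<sigma> j) = 0" using st jZ by (metis mult_zero_right)
    then show ?thesis using sI[OF jZ(1)] unfolding I0Z Z_def by auto
  qed
  have b: "\<sigma> j \<in> I - I0 \<and> qrel j (\<sigma> j)" if j: "j \<in> I - I0" for j
  proof
    show "qrel j (\<sigma> j)" unfolding qrel_def using st j g(3) by (metis DiffD1)
    show "\<sigma> j \<in> I - I0"
    proof (cases "K = {1}")
      case True
      then show ?thesis using sI j I0_K1[OF True] by simp
    next
      case False
      then have I0Z: "I0 = Z" by (simp add: I0_def)
      show ?thesis
      proof (rule ccontr)
        assume "\<sigma> j \<notin> I - I0"
        then have "\<sigma> j \<in> Z" using sI j I0Z by auto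
        then have "\<forall>x\<in>X. k j * x j = 0" using st j unfolding Z_def by auto
        then have "\<forall>x\<in>X. x j = 0" using knz j by auto
        then show False using j unfolding I0Z Z_def by auto
      qed
    qed
  qed
  have c: "k j = xp (\<sigma> j) * inverse (xp j)" if j: "j \<in> I - I0" for j
  proof -
    have sj: "\<sigma> j \<in> I - I0" "qrel j (\<sigma> j)" using b[OF j] by auto
    have r: "rep (\<sigma> j) = rep j" using rep_eq[OF sj(2)] .
    have e1: "\<forall>x\<in>X. x j = xi j * x (rep j)" "xi j \<in> K" using xi_prop[OF j] by auto
    have e2: "\<forall>x\<in>X. x (\<sigma> j) = xi (\<sigma> j) * x (rep j)" "xi (\<sigma> j) \<in> K" using xi_prop[OF sj(1)] r by auto
    have xx: "xp j = xi j" "xp (\<sigma> j) = xi (\<sigma> j)" using j sj by (auto simp: xp_def)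
    have nz: "xi j \<noteq> 0" using e1(2) K0 by blast
    show ?thesis
    proof (cases "K = {1}")
      case True
      then show ?thesis using e1(2) e2(2) g(3) j xx by auto
    next
      case False
      then have I0Z: "I0 = Z" by (simp add: I0_def)
      have "rep j \<in> I - I0" using rep_in[OF j] .
      then obtain x where x: "x \<in> X" "x (rep j) \<noteq> 0" unfolding I0Z Z_def by auto
      have "k j * (xi j * x (rep j)) = xi (\<sigma> j) * x (rep j)"
        using st[OF x(1)] j e1(1) e2(1) x(1) by auto
      then have "(k j * xi j) * x (rep j) = xi (\<sigma> j) * x (rep j)" by (simp add: mult.assoc)
      then have "k j * xi j = xi (\<sigma> j)" using x(2) by simp
      then have "k j = xi (\<sigma> j) * inverse (xi j)" using nz
        by (metis cancel2 mult.assoc right_inverse mult_1_right)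
      then show ?thesis using xx by simp
    qed
  qed
  have inv0: "\<forall>j\<in>I0. \<sigma> j \<in> I0" using a by blast
  define \<sigma>0 where "\<sigma>0 = (\<lambda>j. if j \<in> I0 then \<sigma> j else j)"
  define \<sigma>1 where "\<sigma>1 = (\<lambda>j. if j \<in> I0 then j else \<sigma> j)"
  define k0 where "k0 = (\<lambda>j. if j \<in> I0 then k j else 1)"
  have p0: "\<sigma>0 permutes I0" using perm_restrict(1)[OF g(2) finI I0_sub inv0] unfolding \<sigma>0_def .
  have p1: "\<sigma>1 permutes I - I0" using perm_restrict(2)[OF g(2) finI I0_sub inv0] unfolding \<sigma>1_def .
  have p1I: "\<sigma>1 permutes I" using permutes_subset[OF p1] by blast
  have hmem: "cm \<sigma>1 \<in> setprod_list I (map (Pblock I I0 xi) bs)"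
  proof (rule blocks_prod)
    show "distinct bs" using bsd(1) .
    show "\<forall>b\<in>set bs. b \<subseteq> I" using bsd(2) Pt_union by blast
    show "\<forall>b\<in>set bs. \<forall>b'\<in>set bs. b \<noteq> b' \<longrightarrow> b \<inter> b' = {}" using bsd(2) Pt_disj by blast
    show "\<sigma>1 permutes \<Union>(set bs)" using p1 bsd(2) Pt_union by simp
    show "\<forall>b\<in>set bs. \<forall>j\<in>b. \<sigma>1 j \<in> b"
    proof (intro ballI)
      fix b j assume bb: "b \<in> set bs" and jb: "j \<in> b"
      obtain i where i: "i \<in> I - I0" "b = cls i" using bb bsd(2) unfolding Pt_def by auto
      have j: "j \<in> I - I0" "qrel i j" using jb i unfolding cls_def by auto
      have "\<sigma> j \<in> I - I0" "qrel j (\<sigma> j)" using b[OF j(1)] by auto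
      then have "\<sigma> j \<in> cls i" using j(2) qrel_trans unfolding cls_def by blast
      then show "\<sigma>1 j \<in> b" using j(1) i(2) unfolding \<sigma>1_def by simp
    qed
  qed
  show "g \<in> setprod_list I ((if I0 = {} then [] else [P0grp I K H I0]) @ map (Pblock I I0 xi) bs)"
  proof (cases "I0 = {}")
    case True
    have "g = cm \<sigma>1" unfolding g(1) cm_def
      by (rule mon_cong) (use True c in \<open>auto simp: \<sigma>1_def\<close>)
    then show ?thesis using hmem True by simp
  next
    case False
    then have K1': "K \<noteq> {1}" by (auto simp: I0_def)
    have fin0: "finite I0" using finI I0_sub finite_subset by blast
    have gdec: "g = mmult I (mon I \<sigma>0 k0) (cm \<sigma>1)"
      unfolding g(1) cm_def mon_mult[OF finI p1I]
    proof (rule mon_cong)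
      show "\<forall>j\<in>I. \<sigma> j = (\<sigma>0 \<circ> \<sigma>1) j"
      proof
        fix j assume j: "j \<in> I"
        show "\<sigma> j = (\<sigma>0 \<circ> \<sigma>1) j"
        proof (cases "j \<in> I0")
          case True then show ?thesis by (simp add: \<sigma>0_def \<sigma>1_def)
        next
          case False then have "\<sigma> j \<notin> I0" using b j by blast
          then show ?thesis using False by (simp add: \<sigma>0_def \<sigma>1_def)
        qed
      qed
      show "\<forall>j\<in>I. k j = k0 (\<sigma>1 j) * (xp (\<sigma>1 j) * inverse (xp j))"
      proof
        fix j assume j: "j \<in> I"
        show "k j = k0 (\<sigma>1 j) * (xp (\<sigma>1 j) * inverse (xp j))"
        proof (cases "j \<in> I0")
          case True then show ?thesis by (simp add: k0_def \<sigma>1_def xp_def)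
        next
          case False then have "\<sigma> j \<notin> I0" using b j by blast
          then show ?thesis using False c j by (simp add: k0_def \<sigma>1_def)
        qed
      qed
    qed
    have ip: "inv \<sigma>1 permutes I - I0" using permutes_inv[OF p1] .
    have ipI: "inv \<sigma>1 permutes I" using permutes_subset[OF ip] by blast
    have g0eq: "mmult I g (cm (inv \<sigma>1)) = mon I \<sigma>0 k0"
      unfolding g(1) cm_def mon_mult[OF finI ipI]
    proof (rule mon_cong)
      show "\<forall>j\<in>I. (\<sigma> \<circ> inv \<sigma>1) j = \<sigma>0 j"
      proof
        fix j assume j: "j \<in> I"
        show "(\<sigma> \<circ> inv \<sigma>1) j = \<sigma>0 j"
        proof (cases "j \<in> I0")
          case True
          then have "inv \<sigma>1 j = j" using permutes_not_in[OF ip] by simp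
          then show ?thesis using True by (simp add: \<sigma>0_def)
        next
          case False
          define i where "i = inv \<sigma>1 j"
          have i: "i \<in> I - I0" "\<sigma>1 i = j"
            using permutes_in_image[OF ip, of j] j False permutes_inverses(1)[OF p1, of j]
            unfolding i_def by auto
          then have "\<sigma> i = j" by (simp add: \<sigma>1_def)
          then show ?thesis using False by (simp add: \<sigma>0_def i_def[symmetric])
        qed
      qed
      show "\<forall>j\<in>I. k (inv \<sigma>1 j) * (xp (inv \<sigma>1 j) * inverse (xp j)) = k0 j"
      proof
        fix j assume j: "j \<in> I"
        show "k (inv \<sigma>1 j) * (xp (inv \<sigma>1 j) * inverse (xp j)) = k0 j"
        proof (cases "j \<in> I0")
          case True
          then have "inv \<sigma>1 j = j" using permutes_not_in[OF ip] by simp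
          then show ?thesis using True by (simp add: k0_def xp_def)
        next
          case False
          define i where "i = inv \<sigma>1 j"
          have i: "i \<in> I - I0" "\<sigma>1 i = j"
            using permutes_in_image[OF ip, of j] j False permutes_inverses(1)[OF p1, of j]
            unfolding i_def by auto
          then have si: "\<sigma> i = j" by (simp add: \<sigma>1_def)
          have ki: "k i = xp j * inverse (xp i)" using c[OF i(1)] si by simp
          have nz: "xp i \<noteq> 0" "xp j \<noteq> 0" using xp_nz i(1) j by auto
          have "k i * (xp i * inverse (xp j)) = 1" unfolding ki using nz
            by (simp add: mult.assoc cancel1)
          then show ?thesis using False by (simp add: k0_def i_def[symmetric])
        qed
      qed
    qed
    have g0M: "mon I \<sigma>0 k0 \<in> Mon I" using Mon_mult[OF finI gM cm_Mon[OF ipI]] g0eq by simp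
    then obtain \<sigma>' k' where g0': "mon I \<sigma>0 k0 = mon I \<sigma>' k'"
        "prod_list (map k' (sorted_list_of_set I)) \<in> H" unfolding Mon_def by blast
    have p0I: "\<sigma>0 permutes I" using permutes_subset[OF p0 I0_sub] .
    have k0K: "\<forall>j\<in>I. k0 j \<in> K" using g(3) K1 by (simp add: k0_def)
    have k0nz: "\<forall>j\<in>I. k0 j \<noteq> 0" using k0K K0 by blast
    have "\<forall>j\<in>I. k0 j = k' j" using mon_unique[OF p0I k0nz g0'(1)] by blast
    then have e: "map k0 (sorted_list_of_set I) = map k' (sorted_list_of_set I)" using finI by simp
    have "prod_list (map k0 (sorted_list_of_set I)) \<in> H" unfolding e using g0'(2) .
    then have "prod_list (map k0 (sorted_list_of_set I0)) \<in> H"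
      using filter_prod[OF finI I0_sub _ k0K] by (simp add: k0_def)
    moreover have "map k0 (sorted_list_of_set I0) = map k (sorted_list_of_set I0)"
      using fin0 by (simp add: k0_def)
    ultimately have pk: "prod_list (map k (sorted_list_of_set I0)) \<in> H" by metis
    have kK0: "\<forall>j\<in>I0. k j \<in> K" using g(3) I0_sub by blast
    have "mon I0 \<sigma>0 k \<in> Ggrp I0 K H" unfolding Ggrp_eq[OF fin0] Mon_def using p0 kK0 pk by blast
    moreover have "mon I \<sigma>0 k0 = (\<lambda>i j. if i \<in> I0 \<and> j \<in> I0 then mon I0 \<sigma>0 k i j else idm (I - I0) i j)"
      unfolding k0_def by (rule P0_elem[OF I0_sub p0, symmetric])
    ultimately have "mon I \<sigma>0 k0 \<in> P0grp I K H I0" unfolding P0grp_def by blast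
    then show ?thesis using gdec hmem False by force
  qed
qed

lemma Stab_Ptriple: "Stab = Ptriple I K H I0 Pt xi"
proof -
  define bs where "bs = (SOME bs. distinct bs \<and> set bs = Pt)"
  have "\<exists>bs. distinct bs \<and> set bs = Pt" using finite_distinct_list[OF Pt_fin] by blast
  then have bsd: "distinct bs" "set bs = Pt" unfolding bs_def by (metis (mono_tags, lifting) someI_ex)+
  have PT: "Ptriple I K H I0 Pt xi = setprod_list I ((if I0 = {} then [] else [P0grp I K H I0]) @ map (Pblock I I0 xi) bs)"
    unfolding Ptriple_def bs_def ..
  have sub2: "setprod_list I ((if I0 = {} then [] else [P0grp I K H I0]) @ map (Pblock I I0 xi) bs) \<subseteq> Stab"
  proof (rule setprod_sub, intro ballI)
    fix A assume A: "A \<in> set ((if I0 = {} then [] else [P0grp I K H I0]) @ map (Pblock I I0 xi) bs)"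
    show "A \<subseteq> Stab"
    proof (cases "A \<in> set (map (Pblock I I0 xi) bs)")
      case True
      then obtain b where b: "b \<in> Pt" "A = Pblock I I0 xi b" using bsd(2) by auto
      have bI: "b \<subseteq> I" using b(1) Pt_union by blast
      show ?thesis unfolding b(2) Pblock_eq[OF bI] using block_Stab[OF b(1)] by blast
    next
      case False
      then have "I0 \<noteq> {}" "A = P0grp I K H I0" using A by (auto split: if_splits)
      then show ?thesis using P0_Stab by (auto simp: I0_def split: if_splits)
    qed
  qed
  show ?thesis using Stab_sub[OF bsd] sub2 PT by blast
qed

lemma triple: "parabolic_triple I K I0 Pt xi"
  unfolding parabolic_triple_def using I0_sub partition xi_prop I0_K1 by blast

end

theorem proposition4p3:
  fixes n :: nat and K H :: "quat set" and P :: "qmat set"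
  assumes "n \<ge> 3"
    and "finite K" and "finite H"
    and "qsubgroup K" and "qsubgroup H"
    and "commutators_in K H" and "qnormal H K"
    and "parabolic {1..n} K H P"
  shows "\<exists>I0 Pt \<xi>. parabolic_triple {1..n} K I0 Pt \<xi> \<and> P = Ptriple {1..n} K H I0 Pt \<xi>"
proof -
  obtain X where X: "X \<subseteq> qvecs {1..n}" "P = stabiliser {1..n} (Ggrp {1..n} K H) X"
    using assms(8) unfolding parabolic_def by blast
  interpret st: stabsetup K H "{1..n}" X
    using assms(4-7) X(1) unfolding qnormal_def
    by unfold_locales auto
  have "P = st.Stab" unfolding st.Stab_def X(2) ..
  then show ?thesis using st.triple st.Stab_Ptriple by blast
qed

end
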